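(* Let $\mathfrak{N}$ be a pseudo-Euclidean 2-step nilpotent Lie algebra with center $\mathfrak{Z}$, let $(e_1,\ldots,e_p)$ be any basis of $\mathfrak{Z}$ with associated structure endomorphisms $(J_1,\ldots,J_p)$, and define the endomorphisms $$\mathcal{J}^-=\frac12\sum_{i,j=1}^p\langle e_i,e_j\rangle\, J_i\circ J_j,\qquad \mathcal{J}^+(u)=-\frac14\sum_{i,j=1}^p\langle e_i,u\rangle\,\mathrm{tr}(J_i\circ J_j)\,e_j,$$ and the bilinear forms $\mathfrak{r}^\pm(u,v)=\langle\mathcal{J}^\pm u,v\rangle$. Then the Ricci curvature $\mathfrak{r}$ of $\mathfrak{N}$ satisfies $\mathfrak{r}=\mathfrak{r}^++\mathfrak{r}^-$, and the scalar curvature $\mathfrak{s}$ satisfies $\mathfrak{s}=\frac12\mathrm{tr}\,\mathcal{J}^-=-\mathrm{tr}\,\mathcal{J}^+$.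
   Context: A pseudo-Euclidean Lie algebra is a finite-dimensional real Lie algebra $\mathfrak{g}$ with a nondegenerate symmetric bilinear form $\langle\cdot,\cdot\rangle$. Its Levi-Civita product $\mathcal{D}$ is defined by $2\langle\mathcal{D}_uv,w\rangle=\langle[u,v],w\rangle+\langle[w,u],v\rangle+\langle[w,v],u\rangle$; its curvature is $\mathcal{R}(u,v)w=\mathcal{D}_{[u,v]}w-\mathcal{D}_u\mathcal{D}_vw+\mathcal{D}_v\mathcal{D}_uw$; its Ricci curvature is $\mathfrak{r}(u,v)=\mathrm{tr}(w\mapsto\mathcal{R}(u,w)v)$; writing $\mathfrak{r}(u,v)=\langle\mathcal{J}u,v\rangle$, the scalar curvature is $\mathfrak{s}=\mathrm{tr}\,\mathcal{J}$. A Lie algebra $\mathfrak{N}$ is 2-step nilpotent if $[\mathfrak{N},\mathfrak{N}]\ne0$ and $[\mathfrak{N},\mathfrak{N}]\subset\mathfrak{Z}$ (the center). Given a basis $(e_1,\ldots,e_p)$ of $\mathfrak{Z}$, the structure endomorphisms $J_i$ are the $\langle\cdot,\cdot\rangle$-skew-symmetric endomorphisms with $[u,v]=\sum_i\langle J_iu,v\rangle e_i$; $\mathcal{J}^\pm$ do not depend on the choice of basis. *)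

theory Defs
  imports "HOL-Analysis.Analysis"
begin

text \<open>The underlying finite-dimensional real vector space is a type 'a of class
euclidean_space; its built-in inner product is used only to define the trace of
an endomorphism (sum of diagonal entries w.r.t. the orthonormal Basis), never as
the metric. The pseudo-Euclidean metric is the separate form g.\<close>

definition trace :: "('a::euclidean_space \<Rightarrow> 'a) \<Rightarrow> real" where
  "trace f = (\<Sum>b\<in>Basis. (f b) \<bullet> b)"

definition lie_algebra :: "('a::euclidean_space \<Rightarrow> 'a \<Rightarrow> 'a) \<Rightarrow> bool" where
  "lie_algebra L \<longleftrightarrow> bilinear L \<and> (\<forall>u. L u u = 0) \<and>
     (\<forall>u v w. L u (L v w) + L v (L w u) + L w (L u v) = 0)"

definition pseudo_euclidean_form :: "('a::euclidean_space \<Rightarrow> 'a \<Rightarrow> real) \<Rightarrow> bool" where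
  "pseudo_euclidean_form g \<longleftrightarrow> bilinear g \<and> (\<forall>u v. g u v = g v u) \<and>
     (\<forall>u. (\<forall>v. g u v = 0) \<longrightarrow> u = 0)"

definition center :: "('a \<Rightarrow> 'a \<Rightarrow> 'a::euclidean_space) \<Rightarrow> 'a set" where
  "center L = {z. \<forall>u. L z u = 0}"

definition two_step_nilpotent :: "('a::euclidean_space \<Rightarrow> 'a \<Rightarrow> 'a) \<Rightarrow> bool" where
  "two_step_nilpotent L \<longleftrightarrow> (\<exists>u v. L u v \<noteq> 0) \<and> (\<forall>u v. L u v \<in> center L)"

definition LC :: "('a \<Rightarrow> 'a \<Rightarrow> 'a::euclidean_space) \<Rightarrow> ('a \<Rightarrow> 'a \<Rightarrow> real) \<Rightarrow> 'a \<Rightarrow> 'a \<Rightarrow> 'a" where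
  "LC L g u v = (THE x. \<forall>w. 2 * g x w = g (L u v) w + g (L w u) v + g (L w v) u)"

definition curv :: "('a \<Rightarrow> 'a \<Rightarrow> 'a::euclidean_space) \<Rightarrow> ('a \<Rightarrow> 'a \<Rightarrow> real) \<Rightarrow> 'a \<Rightarrow> 'a \<Rightarrow> 'a \<Rightarrow> 'a" where
  "curv L g u v w = LC L g (L u v) w - LC L g u (LC L g v w) + LC L g v (LC L g u w)"

definition ricci :: "('a \<Rightarrow> 'a \<Rightarrow> 'a::euclidean_space) \<Rightarrow> ('a \<Rightarrow> 'a \<Rightarrow> real) \<Rightarrow> 'a \<Rightarrow> 'a \<Rightarrow> real" where
  "ricci L g u v = trace (\<lambda>w. curv L g u w v)"

definition ricci_op :: "('a \<Rightarrow> 'a \<Rightarrow> 'a::euclidean_space) \<Rightarrow> ('a \<Rightarrow> 'a \<Rightarrow> real) \<Rightarrow> 'a \<Rightarrow> 'a" where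
  "ricci_op L g u = (THE x. \<forall>v. g x v = ricci L g u v)"

definition scalar_curv :: "('a \<Rightarrow> 'a \<Rightarrow> 'a::euclidean_space) \<Rightarrow> ('a \<Rightarrow> 'a \<Rightarrow> real) \<Rightarrow> real" where
  "scalar_curv L g = trace (ricci_op L g)"

definition Jminus :: "('a \<Rightarrow> 'a \<Rightarrow> real) \<Rightarrow> nat \<Rightarrow> (nat \<Rightarrow> 'a::euclidean_space) \<Rightarrow> (nat \<Rightarrow> 'a \<Rightarrow> 'a) \<Rightarrow> 'a \<Rightarrow> 'a" where
  "Jminus g p e J u = (1/2) *\<^sub>R (\<Sum>i<p. \<Sum>j<p. g (e i) (e j) *\<^sub>R J i (J j u))"

definition Jplus :: "('a \<Rightarrow> 'a \<Rightarrow> real) \<Rightarrow> nat \<Rightarrow> (nat \<Rightarrow> 'a::euclidean_space) \<Rightarrow> (nat \<Rightarrow> 'a \<Rightarrow> 'a) \<Rightarrow> 'a \<Rightarrow> 'a" where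
  "Jplus g p e J u = (-1/4) *\<^sub>R (\<Sum>i<p. \<Sum>j<p. (g (e i) u * trace (J i \<circ> J j)) *\<^sub>R e j)"

end

theory Submission
  imports Defs
begin



lemma trace_add: "trace (\<lambda>w. f w + h w) = trace (\<lambda>w. f w) + trace (\<lambda>w. h w)"
  by (simp add: trace_def inner_add_left sum.distrib)
lemma trace_diff: "trace (\<lambda>w. f w - h w) = trace (\<lambda>w. f w) - trace (\<lambda>w. h w)"
  by (simp add: trace_def inner_diff_left sum_subtractf)
lemma trace_neg: "trace (\<lambda>w. - f w) = - trace (\<lambda>w. f w)"
  by (simp add: trace_def sum_negf)
lemma trace_scale: "trace (\<lambda>w. c *\<^sub>R f w) = c * trace (\<lambda>w. f w)"
  by (simp add: trace_def sum_distrib_left)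
lemma trace_sum: "trace (\<lambda>w. \<Sum>i\<in>I. f i w) = (\<Sum>i\<in>I. trace (\<lambda>w. f i w))"
  by (simp add: trace_def inner_sum_left sum.swap[of _ Basis])
lemma trace_rank1:
  assumes "linear \<phi>" shows "trace (\<lambda>w. \<phi> w *\<^sub>R c) = \<phi> c"
proof -
  have "trace (\<lambda>w. \<phi> w *\<^sub>R c) = (\<Sum>b\<in>Basis. \<phi> ((c \<bullet> b) *\<^sub>R b))"
    by (simp add: trace_def linear_scale[OF assms] inner_commute mult.commute)
  also have "\<dots> = \<phi> (\<Sum>b\<in>Basis. (c \<bullet> b) *\<^sub>R b)"
    by (simp add: linear_sum[OF assms])
  finally show ?thesis by (simp add: euclidean_representation)
qed

lemma dual_ex:
  fixes g :: "'a::euclidean_space \<Rightarrow> 'a \<Rightarrow> real"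
  assumes "pseudo_euclidean_form g"
  shows "\<exists>x. \<forall>y. g x y = b \<bullet> y"
proof -
  have bil: "bilinear g" and nd: "\<And>u. (\<forall>v. g u v = 0) \<Longrightarrow> u = 0"
    using assms unfolding pseudo_euclidean_form_def by auto
  have l1: "linear (\<lambda>x. g x y)" for y using bil by (simp add: bilinear_def)
  have l2: "linear (\<lambda>y. g x y)" for x using bil by (simp add: bilinear_def)
  define G where "G x = (\<Sum>c\<in>Basis. g x c *\<^sub>R c)" for x
  have rep: "g x y = G x \<bullet> y" for x y
  proof -
    have "g x y = g x (\<Sum>c\<in>Basis. (y \<bullet> c) *\<^sub>R c)" by (simp add: euclidean_representation)
    also have "\<dots> = (\<Sum>c\<in>Basis. (y \<bullet> c) * g x c)"
      by (simp add: linear_sum[OF l2] linear_scale[OF l2])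
    also have "\<dots> = G x \<bullet> y" by (simp add: G_def inner_sum_right inner_commute mult.commute)
    finally show ?thesis .
  qed
  have lin: "linear G"
    unfolding G_def by (rule linearI) (simp_all add: linear_add[OF l1] linear_scale[OF l1] scaleR_add_left sum.distrib scaleR_sum_right)
  have "inj G"
  proof (rule linear_injective_0[OF lin, THEN iffD2], intro allI impI)
    fix x assume "G x = 0" then have "\<forall>v. g x v = 0" by (simp add: rep)
    then show "x = 0" by (rule nd)
  qed
  then have "surj G" using lin by (simp add: linear_injective_imp_surjective)
  then obtain x where "G x = b" by (metis surjE)
  then show ?thesis by (auto simp: rep)
qed




locale ps2 =
  fixes L :: "'a::euclidean_space \<Rightarrow> 'a \<Rightarrow> 'a" and g :: "'a \<Rightarrow> 'a \<Rightarrow> real"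
    and p :: nat and e :: "nat \<Rightarrow> 'a" and J :: "nat \<Rightarrow> 'a \<Rightarrow> 'a"
  assumes pef: "pseudo_euclidean_form g"
    and Jlin: "\<And>i. linear (J i)"
    and Jskew: "\<And>i u v. g (J i u) v = - g u (J i v)"
    and Je: "\<And>i k. J i (e k) = 0"
    and Ldef: "\<And>u v. L u v = (\<Sum>i<p. g (J i u) v *\<^sub>R e i)"
begin

lemma gbil: "bilinear g" and gsym: "g u v = g v u" and gnd: "(\<And>v. g x v = 0) \<Longrightarrow> x = 0"
  using pef unfolding pseudo_euclidean_form_def by auto

lemma gl1: "linear (\<lambda>x. g x y)" using gbil by (simp add: bilinear_def)
lemma gl2: "linear (\<lambda>y. g x y)" using gbil by (simp add: bilinear_def)

lemma g_simps[simp]: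
  "g (x + y) z = g x z + g y z" "g z (x + y) = g z x + g z y"
  "g (x - y) z = g x z - g y z" "g z (x - y) = g z x - g z y"
  "g (- x) z = - g x z" "g z (- x) = - g z x"
  "g (c *\<^sub>R x) z = c * g x z" "g z (c *\<^sub>R x) = c * g z x"
  "g 0 z = 0" "g z 0 = 0"
  "g (\<Sum>i\<in>I. f i) z = (\<Sum>i\<in>I. g (f i) z)" "g z (\<Sum>i\<in>I. f i) = (\<Sum>i\<in>I. g z (f i))"
  using linear_add[OF gl1] linear_add[OF gl2] linear_diff[OF gl1] linear_diff[OF gl2]
    linear_neg[OF gl1] linear_neg[OF gl2] linear_scale[OF gl1] linear_scale[OF gl2]
    linear_0[OF gl1] linear_0[OF gl2] linear_sum[OF gl1] linear_sum[OF gl2]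
  by auto

lemma J_simps[simp]:
  "J i (x + y) = J i x + J i y" "J i (x - y) = J i x - J i y" "J i (- x) = - J i x"
  "J i (c *\<^sub>R x) = c *\<^sub>R J i x" "J i 0 = 0" "J i (\<Sum>k\<in>I. f k) = (\<Sum>k\<in>I. J i (f k))"
  using linear_add[OF Jlin] linear_diff[OF Jlin] linear_neg[OF Jlin] linear_scale[OF Jlin]
    linear_0[OF Jlin] linear_sum[OF Jlin] by auto

lemma gJe[simp]: "g (e i) (J j y) = 0"
  using Jskew[of j "e i" y] Je by simp

lemma gJsw: "g w (J i u) = - g u (J i w)"
  using Jskew[of i w u] gsym[of "J i w" u] by simp

definition br where "br u v = (\<Sum>i<p. g (J i u) v *\<^sub>R e i)"
definition K where "K x y = (\<Sum>i<p. g (e i) x *\<^sub>R J i y)"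
definition D where "D u v = (1/2) *\<^sub>R (br u v - K v u - K u v)"

lemma L_br: "L = br" by (auto simp: Ldef br_def fun_eq_iff)

lemma br_lin2: "linear (br u)"
  by (rule linearI) (simp_all add: br_def scaleR_add_left sum.distrib scaleR_sum_right distrib_left)
lemma br_lin1: "linear (\<lambda>u. br u v)"
  by (rule linearI) (simp_all add: br_def scaleR_add_left sum.distrib scaleR_sum_right distrib_left)
lemma K_lin2: "linear (K x)"
  by (rule linearI) (simp_all add: K_def scaleR_add_right sum.distrib scaleR_sum_right mult.commute)
lemma K_lin1: "linear (\<lambda>x. K x y)"
  by (rule linearI) (simp_all add: K_def scaleR_add_left sum.distrib scaleR_sum_right)

lemma br_simps[simp]:
  "br u (x + y) = br u x + br u y" "br u (x - y) = br u x - br u y" "br u (- x) = - br u x"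
  "br u (c *\<^sub>R x) = c *\<^sub>R br u x"
  using linear_add[OF br_lin2] linear_diff[OF br_lin2] linear_neg[OF br_lin2] linear_scale[OF br_lin2] by auto
lemma K_simps[simp]:
  "K u (x + y) = K u x + K u y" "K u (x - y) = K u x - K u y" "K u (- x) = - K u x"
  "K u (c *\<^sub>R x) = c *\<^sub>R K u x"
  "K (x + y) u = K x u + K y u" "K (x - y) u = K x u - K y u" "K (- x) u = - K x u"
  "K (c *\<^sub>R x) u = c *\<^sub>R K x u"
  using linear_add[OF K_lin2] linear_diff[OF K_lin2] linear_neg[OF K_lin2] linear_scale[OF K_lin2]
   linear_add[OF K_lin1] linear_diff[OF K_lin1] linear_neg[OF K_lin1] linear_scale[OF K_lin1] by auto

lemma J_br[simp]: "J i (br a b) = 0" by (simp add: br_def Je)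
lemma br_br1[simp]: "br (br a b) c = 0" by (simp only: br_def[of "br a b" c] J_br) simp
lemma br_br2[simp]: "br c (br a b) = 0" by (simp only: br_def[of c "br a b"] Jskew J_br) simp
lemma K_br[simp]: "K c (br a b) = 0" by (simp add: K_def)
lemma K_e[simp]: "K c (e k) = 0" by (simp add: K_def Je)
lemma g_e_K[simp]: "g (e i) (K a b) = 0" by (simp add: K_def)
lemma K_K[simp]: "K (K a b) c = 0" by (simp add: K_def)

lemma LC_eq: "LC L g u v = D u v"
proof -
  have key: "2 * g (D u v) w = g (L u v) w + g (L w u) v + g (L w v) u" for w
  proof -
    have a: "g (K v u) w = - g (br w u) v"
      by (simp add: K_def br_def Jskew gsym[of "e _"] sum_negf[symmetric] mult.commute gJsw[of w])
    have b: "g (K u v) w = - g (br w v) u"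
      by (simp add: K_def br_def Jskew gsym[of "e _"] sum_negf[symmetric] mult.commute gJsw[of w])
    show ?thesis by (simp add: D_def L_br a b)
  qed
  show ?thesis unfolding LC_def
  proof (rule the_equality)
    show "\<forall>w. 2 * g (D u v) w = g (L u v) w + g (L w u) v + g (L w v) u" using key by blast
  next
    fix x assume h: "\<forall>w. 2 * g x w = g (L u v) w + g (L w u) v + g (L w v) u"
    have "g (x - D u v) w = 0" for w using spec[OF h, of w] key[of w] by simp
    then show "x = D u v" using gnd[of "x - D u v"] by simp
  qed
qed

end



context ps2 begin

definition dual where "dual b = (SOME x. \<forall>y. g x y = b \<bullet> y)"
lemma dual: "g (dual b) y = b \<bullet> y"
  using someI_ex[OF dual_ex[OF pef, of b]] unfolding dual_def by blast

lemma trace_contract: "trace f = (\<Sum>b\<in>Basis. \<Sum>c\<in>Basis. (dual b \<bullet> c) * g c (f b))"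
proof -
  have "trace f = (\<Sum>b\<in>Basis. g (dual b) (f b))"
    by (simp add: trace_def dual inner_commute)
  also have "\<dots> = (\<Sum>b\<in>Basis. g (\<Sum>c\<in>Basis. (dual b \<bullet> c) *\<^sub>R c) (f b))"
    by (simp only: euclidean_representation)
  also have "\<dots> = (\<Sum>b\<in>Basis. \<Sum>c\<in>Basis. (dual b \<bullet> c) * g c (f b))"
    by simp
  finally show ?thesis .
qed

lemma dual_sym: "dual b \<bullet> c = dual c \<bullet> b"
  using dual[of c "dual b"] dual[of b "dual c"] gsym[of "dual b" "dual c"]
  by (simp add: inner_commute)

lemma trace_J: "trace (J i) = 0"
proof -
  define S where "S = trace (J i)"
  have "S = (\<Sum>b\<in>Basis. \<Sum>c\<in>Basis. (dual b \<bullet> c) * g c (J i b))"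
    unfolding S_def by (rule trace_contract)
  also have "\<dots> = (\<Sum>b\<in>Basis. \<Sum>c\<in>Basis. - ((dual c \<bullet> b) * g b (J i c)))"
  proof (intro sum.cong refl)
    fix b c show "(dual b \<bullet> c) * g c (J i b) = - ((dual c \<bullet> b) * g b (J i c))"
      using gJsw[of c i b] dual_sym[of b c] by simp
  qed
  also have "\<dots> = - (\<Sum>c\<in>Basis. \<Sum>b\<in>Basis. (dual c \<bullet> b) * g b (J i c))"
    by (subst sum.swap) (simp add: sum_negf)
  also have "\<dots> = - S" unfolding S_def by (simp add: trace_contract)
  finally show ?thesis unfolding S_def by simp
qed

lemma trace_J': "trace (\<lambda>w. J i w) = 0" using trace_J by simp

lemma linc1: "linear f \<Longrightarrow> linear (\<lambda>w. g x (f w))"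
  using linear_compose[of f "g x"] gl2 by (simp add: o_def)
lemma linc2: "linear f \<Longrightarrow> linear (\<lambda>w. g (f w) x)"
  using linear_compose[of f "\<lambda>y. g y x"] gl1 by (simp add: o_def)

lemma K_sum[simp]: "K u (\<Sum>k\<in>I. f k) = (\<Sum>k\<in>I. K u (f k))"
  using linear_sum[OF K_lin2] by auto

lemma curv_eq: "curv L g u w v = D (br u w) v - D u (D w v) + D w (D u v)"
  by (simp only: curv_def LC_eq) (simp add: L_br)

lemma D_br: "D (br a b) v = -(1/2) *\<^sub>R K (br a b) v"
  by (simp add: D_def)

lemma DD1: "D u (D w v) = (1/4) *\<^sub>R (- br u (K v w) - br u (K w v) - K (br w v) u + K u (K v w) + K u (K w v))"
  by (simp add: D_def algebra_simps)

lemma tI: "trace (\<lambda>w. K (br u w) v) = (\<Sum>i<p. g (e i) (br u (J i v)))"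
  by (simp add: K_def trace_sum trace_rank1 linc1 br_lin2)

lemma t1: "trace (\<lambda>w. br u (K v w)) = 0"
  by (simp add: br_def[of u] trace_sum trace_rank1 linc1 K_lin2)

lemma t2: "trace (\<lambda>w. br u (K w v)) = (\<Sum>i<p. g (J i u) (K (e i) v))"
  by (simp add: br_def[of u] trace_sum trace_rank1 linc1 K_lin1)

lemma t3: "trace (\<lambda>w. K (br w v) u) = (\<Sum>i<p. g (e i) (br (J i u) v))"
  by (simp add: K_def[of "br _ v"] trace_sum trace_rank1 linc1 br_lin1)

lemma t23: "(\<Sum>i<p. g (J i u) (K (e i) v)) + (\<Sum>i<p. g (e i) (br (J i u) v)) = 0"
proof -
  have "g a (K (e i) v) + g (e i) (br a v) = 0" for a i
    using Jskew by (simp add: K_def br_def gsym[of "e i"] sum.distrib[symmetric] mult.commute minus_equation_iff[of "g _ (J _ _)"])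
  then show ?thesis by (simp add: sum.distrib[symmetric])
qed

lemma t4: "trace (\<lambda>w. K u (K v w)) = (\<Sum>i<p. \<Sum>j<p. (g (e i) u * g (e j) v) * trace (J i \<circ> J j))"
  by (simp add: K_def trace_sum trace_scale o_def sum_distrib_left mult.assoc)

lemma t5: "trace (\<lambda>w. K u (K w v)) = 0"
  by (simp add: K_def[of w v for w] trace_sum trace_rank1 gl2)

lemma s1: "trace (\<lambda>w. br w Y) = 0"
  by (simp add: br_def trace_sum trace_rank1 linc2 Jlin Je)

lemma s2: "trace (\<lambda>w. K Y w) = 0"
  by (simp add: K_def trace_sum trace_scale trace_J')

lemma s3: "trace (\<lambda>w. K w Y) = 0"
  by (simp add: K_def trace_sum trace_rank1 gl2)

end



context ps2 begin

lemma ricci_formula: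
  "ricci L g u v = -(1/2) * (\<Sum>i<p. g (e i) (br u (J i v)))
     - (1/4) * (\<Sum>i<p. \<Sum>j<p. (g (e i) u * g (e j) v) * trace (J i \<circ> J j))"
proof -
  have "(\<lambda>w. curv L g u w v) = (\<lambda>w. (-(1/2)) *\<^sub>R K (br u w) v
     - (1/4) *\<^sub>R (- br u (K v w) - br u (K w v) - K (br w v) u + K u (K v w) + K u (K w v))
     + (1/2) *\<^sub>R (br w (D u v) - K (D u v) w - K w (D u v)))"
  proof
    fix w show "curv L g u w v = (-(1/2)) *\<^sub>R K (br u w) v
     - (1/4) *\<^sub>R (- br u (K v w) - br u (K w v) - K (br w v) u + K u (K v w) + K u (K w v))
     + (1/2) *\<^sub>R (br w (D u v) - K (D u v) w - K w (D u v))"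
      by (simp only: curv_eq D_br DD1[of u w v] D_def[of w "D u v"])
  qed
  then have "ricci L g u v = trace (\<lambda>w. (-(1/2)) *\<^sub>R K (br u w) v
     - (1/4) *\<^sub>R (- br u (K v w) - br u (K w v) - K (br w v) u + K u (K v w) + K u (K w v))
     + (1/2) *\<^sub>R (br w (D u v) - K (D u v) w - K w (D u v)))"
    by (simp add: ricci_def)
  also have "\<dots> = (-(1/2)) * trace (\<lambda>w. K (br u w) v)
     - (1/4) * (- trace (\<lambda>w. br u (K v w)) - trace (\<lambda>w. br u (K w v)) - trace (\<lambda>w. K (br w v) u)
        + trace (\<lambda>w. K u (K v w)) + trace (\<lambda>w. K u (K w v)))
     + (1/2) * (trace (\<lambda>w. br w (D u v)) - trace (\<lambda>w. K (D u v) w) - trace (\<lambda>w. K w (D u v)))"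
    by (simp only: trace_add trace_diff trace_scale trace_neg)
  also have "\<dots> = -(1/2) * (\<Sum>i<p. g (e i) (br u (J i v)))
     - (1/4) * (\<Sum>i<p. \<Sum>j<p. (g (e i) u * g (e j) v) * trace (J i \<circ> J j))"
    using t23[of u v] by (simp add: tI t1 t2 t3 t4 t5 s1 s2 s3 algebra_simps)
  finally show ?thesis .
qed

lemma ricci_J:
  "ricci L g u v = g (Jplus g p e J u) v + g (Jminus g p e J u) v"
proof -
  have a: "g (e i) (br u (J i v)) = - (\<Sum>k<p. g (e i) (e k) * g (J i (J k u)) v)" for i
    by (simp add: br_def Jskew sum_negf[symmetric] mult.commute)
  show ?thesis unfolding ricci_formula
    by (simp add: Jplus_def Jminus_def a sum_negf sum_distrib_left algebra_simps)
qed

lemma ricci_op_eq: "ricci_op L g u = Jplus g p e J u + Jminus g p e J u"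
  unfolding ricci_op_def
proof (rule the_equality)
  show "\<forall>v. g (Jplus g p e J u + Jminus g p e J u) v = ricci L g u v" by (simp add: ricci_J)
next
  fix x assume h: "\<forall>v. g x v = ricci L g u v"
  have "g (x - (Jplus g p e J u + Jminus g p e J u)) v = 0" for v
    using spec[OF h, of v] by (simp add: ricci_J)
  then have "x - (Jplus g p e J u + Jminus g p e J u) = 0" by (rule gnd)
  then show "x = Jplus g p e J u + Jminus g p e J u" by simp
qed

lemma trace_Jplus: "trace (Jplus g p e J) = -(1/4) * (\<Sum>i<p. \<Sum>j<p. g (e i) (e j) * trace (J i \<circ> J j))"
proof -
  have lin: "linear (\<lambda>u. g (e i) u * c)" for i c
    using linear_compose[of "\<lambda>u. g (e i) u" "\<lambda>x. x * c"] gl2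
    by (simp add: o_def linear_iff algebra_simps)
  show ?thesis
    unfolding Jplus_def by (simp add: trace_neg trace_scale trace_sum trace_rank1[OF lin] mult.commute)
qed

lemma trace_Jminus: "trace (Jminus g p e J) = (1/2) * (\<Sum>i<p. \<Sum>j<p. g (e i) (e j) * trace (J i \<circ> J j))"
  unfolding Jminus_def by (simp add: trace_scale trace_sum o_def)

lemma scalar: "scalar_curv L g = (1/2) * trace (Jminus g p e J) \<and> scalar_curv L g = - trace (Jplus g p e J)"
proof -
  have "scalar_curv L g = trace (Jplus g p e J) + trace (Jminus g p e J)"
    unfolding scalar_curv_def ricci_op_eq by (rule trace_add)
  then show ?thesis by (simp add: trace_Jplus trace_Jminus)
qed

end



theorem mainTheorem3:
  fixes L :: "'a::euclidean_space \<Rightarrow> 'a \<Rightarrow> 'a"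
    and g :: "'a \<Rightarrow> 'a \<Rightarrow> real"
    and p :: nat and e :: "nat \<Rightarrow> 'a" and J :: "nat \<Rightarrow> 'a \<Rightarrow> 'a"
  assumes "lie_algebra L"
    and "pseudo_euclidean_form g"
    and "two_step_nilpotent L"
    and "inj_on e {..<p}" and "independent (e ` {..<p})"
    and "span (e ` {..<p}) = center L"
    and "\<And>i. i < p \<Longrightarrow> linear (J i)"
    and "\<And>i u v. i < p \<Longrightarrow> g (J i u) v = - g u (J i v)"
    and "\<And>u v. L u v = (\<Sum>i<p. g (J i u) v *\<^sub>R e i)"
  shows "(\<forall>u v. ricci L g u v = g (Jplus g p e J u) v + g (Jminus g p e J u) v)
    \<and> scalar_curv L g = (1/2) * trace (Jminus g p e J)
    \<and> scalar_curv L g = - trace (Jplus g p e J)"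
proof -
  note pef = assms(2)
  have bil: "bilinear g" and gnd: "\<And>u. (\<forall>v. g u v = 0) \<Longrightarrow> u = 0"
    using pef unfolding pseudo_euclidean_form_def by auto
  have gl1: "linear (\<lambda>x. g x y)" for y using bil by (simp add: bilinear_def)
  define e0 where "e0 k = (if k < p then e k else 0)" for k
  define J0 where "J0 i = (if i < p then J i else (\<lambda>x. 0))" for i
  have indep: "c i = 0" if s: "(\<Sum>i<p. c i *\<^sub>R e i) = 0" and i: "i < p" for c i
  proof -
    define u where "u v = c (inv_into {..<p} e v)" for v
    have "(\<Sum>v\<in>e ` {..<p}. u v *\<^sub>R v) = (\<Sum>i<p. u (e i) *\<^sub>R e i)"
      by (rule sum.reindex[OF assms(4), unfolded o_def])
    also have "\<dots> = (\<Sum>i<p. c i *\<^sub>R e i)"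
      by (intro sum.cong refl) (simp add: u_def inv_into_f_f[OF assms(4)])
    finally have z: "(\<Sum>v\<in>e ` {..<p}. u v *\<^sub>R v) = 0" using s by simp
    have "u (e i) = 0"
      using independentD[OF assms(5) _ subset_refl z] i by auto
    then show ?thesis by (simp add: u_def inv_into_f_f[OF assms(4)] i)
  qed
  have Je: "J i (e k) = 0" if "i < p" "k < p" for i k
  proof -
    have "e k \<in> center L" using assms(6) span_base[of "e k" "e ` {..<p}"] that by auto
    then have "L (e k) u = 0" for u by (simp add: center_def)
    then have "(\<Sum>i<p. g (J i (e k)) u *\<^sub>R e i) = 0" for u using assms(9) by simp
    then have "g (J i (e k)) u = 0" for u using indep[of "\<lambda>i. g (J i (e k)) u" i] that(1) by blast
    then show ?thesis using gnd by blast
  qed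
  have J0lin: "linear (J0 i)" for i by (simp add: J0_def assms(7) linear_zero)
  have J0sk: "g (J0 i u) v = - g u (J0 i v)" for i u v
    using assms(8) linear_0[OF gl1] bil by (simp add: J0_def bilinear_rzero)
  have J0e: "J0 i (e0 k) = 0" for i k by (simp add: J0_def e0_def Je linear_0[OF assms(7)])
  have J0L: "L u v = (\<Sum>i<p. g (J0 i u) v *\<^sub>R e0 i)" for u v
    by (simp add: assms(9) J0_def e0_def)
  interpret ps2 L g p e0 J0
    by (rule ps2.intro[OF pef J0lin J0sk J0e J0L])
  have P: "Jplus g p e J = Jplus g p e0 J0" and M: "Jminus g p e J = Jminus g p e0 J0"
    by (simp_all add: fun_eq_iff Jplus_def Jminus_def J0_def e0_def)
  show ?thesis unfolding P M using ricci_J scalar by blast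
qed



end
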